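(* Let $r\le s$, $M$ the space of complex $r\times s$ matrices, and $\lambda,\lambda'$ pre-partitions of length at most $r$ with associated orbits $O_\lambda,O_{\lambda'}\subset M_\infty$. If $O_{\lambda'}$ is contained in the Zariski closure of $O_\lambda$, then $\lambda\lhd\lambda'$, i.e. $\lambda_i+\dots+\lambda_r\le\lambda'_i+\dots+\lambda'_r$ for all $i$.
   Context: The $\mathbb{C}$-points of the arc space $M_\infty$ are $r\times s$ matrices over $\mathbb{C}[[t]]$, acted on by $G_\infty$, $G=GL_r\times GL_s$, via $(g,h)\cdot A=gAh^{-1}$. A pre-partition of length at most $r$ is $\lambda_1\ge\dots\ge\lambda_r\ge0$ in $\mathbb N\cup\{\infty\}$ (with $\infty>n$, $\infty+n=\infty$). $\delta_\lambda$ is the $r\times s$ matrix with first $s-r$ columns zero and last $r$ columns $\mathrm{diag}(t^{\lambda_1},\dots,t^{\lambda_r})$ ($t^\infty=0$), and $O_\lambda=G_\infty\cdot\delta_\lambda$. *)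

theory Defs
  imports "Jordan_Normal_Form.Matrix" "HOL-Computational_Algebra.Formal_Power_Series"
    "HOL-Library.Extended_Nat"
begin

text \<open>C-points of the arc space M_infinity of r x s complex matrices:
  r x s matrices over C[[t]], i.e. elements of carrier_mat r s of type complex fps mat.\<close>

definition arc_matrices :: "nat \<Rightarrow> nat \<Rightarrow> complex fps mat set" where
  "arc_matrices r s = carrier_mat r s"

text \<open>Regular (polynomial) functions on M_infinity: the polynomial ring generated by the
  coordinate functions A |-> (coefficient of t^k in the entry A_(i,j)).\<close>

inductive_set arc_poly_fun :: "nat \<Rightarrow> nat \<Rightarrow> (complex fps mat \<Rightarrow> complex) set"
  for r s :: nat where
  const: "(\<lambda>A. c) \<in> arc_poly_fun r s"
| coord: "i < r \<Longrightarrow> j < s \<Longrightarrow> (\<lambda>A. fps_nth (A $$ (i, j)) k) \<in> arc_poly_fun r s"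
| add: "f \<in> arc_poly_fun r s \<Longrightarrow> g \<in> arc_poly_fun r s \<Longrightarrow> (\<lambda>A. f A + g A) \<in> arc_poly_fun r s"
| mult: "f \<in> arc_poly_fun r s \<Longrightarrow> g \<in> arc_poly_fun r s \<Longrightarrow> (\<lambda>A. f A * g A) \<in> arc_poly_fun r s"

definition zariski_closure_arc :: "nat \<Rightarrow> nat \<Rightarrow> complex fps mat set \<Rightarrow> complex fps mat set" where
  "zariski_closure_arc r s S =
     {A \<in> arc_matrices r s. \<forall>f \<in> arc_poly_fun r s. (\<forall>B \<in> S. f B = 0) \<longrightarrow> f A = 0}"

text \<open>Pre-partitions of length at most r, indexed 0..r-1 (lambda_1 = lam 0, ...),
  values in N \<union> {\<infinity>} (enat; \<infinity> + n = \<infinity>).\<close>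

definition pre_partition :: "nat \<Rightarrow> (nat \<Rightarrow> enat) \<Rightarrow> bool" where
  "pre_partition r lam \<longleftrightarrow> (\<forall>i j. i \<le> j \<longrightarrow> j < r \<longrightarrow> lam j \<le> lam i)"

definition tpow :: "enat \<Rightarrow> complex fps" where
  "tpow e = (case e of enat n \<Rightarrow> fps_X ^ n | \<infinity> \<Rightarrow> 0)"

definition delta_mat :: "nat \<Rightarrow> nat \<Rightarrow> (nat \<Rightarrow> enat) \<Rightarrow> complex fps mat" where
  "delta_mat r s lam = mat r s (\<lambda>(i, j). if s - r \<le> j \<and> j - (s - r) = i then tpow (lam i) else 0)"

text \<open>O_lambda = G_infinity . delta_lambda, with (g,h).A = g A h^{-1},
  g in GL_r(C[[t]]), h in GL_s(C[[t]]).\<close>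

definition orbit_arc :: "nat \<Rightarrow> nat \<Rightarrow> (nat \<Rightarrow> enat) \<Rightarrow> complex fps mat set" where
  "orbit_arc r s lam =
     {g * delta_mat r s lam * hinv | g h hinv.
        g \<in> carrier_mat r r \<and> invertible_mat g \<and>
        h \<in> carrier_mat s s \<and> hinv \<in> carrier_mat s s \<and>
        inverts_mat h hinv \<and> inverts_mat hinv h}"

definition tail_dominated :: "nat \<Rightarrow> (nat \<Rightarrow> enat) \<Rightarrow> (nat \<Rightarrow> enat) \<Rightarrow> bool" where
  "tail_dominated r lam lam' \<longleftrightarrow> (\<forall>i < r. (\<Sum>k = i..<r. lam k) \<le> (\<Sum>k = i..<r. lam' k))"

end

theory Submission
  imports Defs "Jordan_Normal_Form.Determinant"
begin




lemma apf_sum: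
  assumes "finite I" "\<And>i. i \<in> I \<Longrightarrow> (\<lambda>A. f i A) \<in> arc_poly_fun r s"
  shows "(\<lambda>A. \<Sum>i\<in>I. f i A) \<in> arc_poly_fun r s"
  using assms
proof (induction I rule: finite_induct)
  case empty
  then show ?case using arc_poly_fun.const[of 0] by simp
next
  case (insert x F)
  then show ?case using arc_poly_fun.add[of "\<lambda>A. f x A" r s "\<lambda>A. \<Sum>i\<in>F. f i A"] by simp
qed

lemma apf_prod:
  assumes "finite I" "\<And>i. i \<in> I \<Longrightarrow> (\<lambda>A. f i A) \<in> arc_poly_fun r s"
  shows "(\<lambda>A. \<Prod>i\<in>I. f i A) \<in> arc_poly_fun r s"
  using assms
proof (induction I rule: finite_induct)
  case empty
  then show ?case using arc_poly_fun.const[of 1] by simp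
next
  case (insert x F)
  then show ?case using arc_poly_fun.mult[of "\<lambda>A. f x A" r s "\<lambda>A. \<Prod>i\<in>F. f i A"] by simp
qed

lemma apf_det:
  assumes "\<And>i j. i < n \<Longrightarrow> j < n \<Longrightarrow> (\<lambda>A. F A i j) \<in> arc_poly_fun r s"
  shows "(\<lambda>A. det (mat n n (\<lambda>(i,j). F A i j))) \<in> arc_poly_fun r s"
proof -
  have eq: "det (mat n n (\<lambda>(i,j). F A i j)) =
     (\<Sum>p\<in>{p. p permutes {0..<n}}. of_int (signof p) * (\<Prod>i = 0..<n. F A i (p i)))" for A
  proof -
    have "det (mat n n (\<lambda>(i,j). F A i j)) = (\<Sum>p\<in>{p. p permutes {0..<n}}. signof p * (\<Prod>i = 0..<n. mat n n (\<lambda>(i,j). F A i j) $$ (i, p i)))"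
      by (rule det_def') simp
    also have "\<dots> = (\<Sum>p\<in>{p. p permutes {0..<n}}. of_int (signof p) * (\<Prod>i = 0..<n. F A i (p i)))"
    proof (rule sum.cong[OF refl])
      fix p assume "p \<in> {p. p permutes {0..<n}}"
      hence "\<And>i. i < n \<Longrightarrow> p i < n" using permutes_in_image by fastforce
      thus "signof p * (\<Prod>i = 0..<n. mat n n (\<lambda>(i,j). F A i j) $$ (i, p i)) = of_int (signof p) * (\<Prod>i = 0..<n. F A i (p i))"
        by (simp add: sign_def)
    qed
    finally show ?thesis .
  qed
  show ?thesis unfolding eq
  proof (rule apf_sum)
    show "finite {p. p permutes {0..<n}}" by (simp add: finite_permutations)
    fix p assume p: "p \<in> {p. p permutes {0..<n}}"
    hence pi: "\<And>i. i < n \<Longrightarrow> p i < n" using permutes_in_image by fastforce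
    have "(\<lambda>A. \<Prod>i = 0..<n. F A i (p i)) \<in> arc_poly_fun r s"
      by (rule apf_prod) (auto intro: assms pi)
    from arc_poly_fun.mult[OF arc_poly_fun.const this]
    show "(\<lambda>A. of_int (signof p) * (\<Prod>i = 0..<n. F A i (p i))) \<in> arc_poly_fun r s" .
  qed
qed

lemma det_low_rank:
  fixes X Y :: "'a :: comm_ring_1 mat"
  assumes X: "X \<in> carrier_mat n q" and Y: "Y \<in> carrier_mat q n" and qn: "q < n"
  shows "det (X * Y) = 0"
proof -
  define X' where "X' = mat n n (\<lambda>(i,j). if j < q then X $$ (i,j) else 0)"
  define Y' where "Y' = mat n n (\<lambda>(i,j). if i < q then Y $$ (i,j) else 0)"
  have "X * Y = X' * Y'"
  proof (rule eq_matI)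
    fix i j assume ij: "i < dim_row (X' * Y')" "j < dim_col (X' * Y')"
    hence i: "i < n" and j: "j < n" by (auto simp: X'_def Y'_def)
    have "(X * Y) $$ (i,j) = (\<Sum>k<q. X $$ (i,k) * Y $$ (k,j))"
      using X Y i j by (simp add: index_mult_mat scalar_prod_def atLeast0LessThan)
    also have "\<dots> = (\<Sum>k<n. (if k < q then X $$ (i,k) else 0) * (if k < q then Y $$ (k,j) else 0))"
      by (rule sum.mono_neutral_cong_left) (use qn in auto)
    also have "\<dots> = (X' * Y') $$ (i,j)"
      using i j by (simp add: X'_def Y'_def index_mult_mat scalar_prod_def atLeast0LessThan)
    finally show "(X * Y) $$ (i,j) = (X' * Y') $$ (i,j)" .
  qed (use X Y in \<open>auto simp: X'_def Y'_def\<close>)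
  also have "det (X' * Y') = det X' * det Y'"
    by (rule det_mult) (auto simp: X'_def Y'_def)
  also have "det Y' = 0"
  proof -
    have "det Y' = (\<Sum>p\<in>{p. p permutes {0..<n}}. signof p * (\<Prod>i = 0..<n. Y' $$ (i, p i)))"
      by (rule det_def') (simp add: Y'_def)
    also have "\<dots> = 0"
    proof (rule sum.neutral, intro ballI)
      fix p assume p: "p \<in> {p. p permutes {0..<n}}"
      hence "p (n-1) < n" using permutes_in_image qn by fastforce
      hence "Y' $$ (n-1, p (n-1)) = 0" using qn by (simp add: Y'_def)
      hence "(\<Prod>i = 0..<n. Y' $$ (i, p i)) = 0"
        using qn by (intro prod_zero[of "{0..<n}"]) (auto intro!: bexI[of _ "n-1"])
      thus "signof p * (\<Prod>i = 0..<n. Y' $$ (i, p i)) = 0" by simp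
    qed
    finally show ?thesis .
  qed
  finally show ?thesis by simp
qed



lemma fps_coef_aux:
  fixes f h :: "complex fps"
  assumes "l < a"
  shows "(if l' \<le> l then fps_nth (f * fps_X ^ c * h) (l - l') else 0) =
    (\<Sum>l1\<in>{c..<a}. (if l1 \<le> l then fps_nth f (l - l1) else 0) *
        (if c + l' \<le> l1 then fps_nth h (l1 - c - l') else 0))"
proof -
  have R: "(\<Sum>l1\<in>{c..<a}. (if l1 \<le> l then fps_nth f (l - l1) else 0) *
        (if c + l' \<le> l1 then fps_nth h (l1 - c - l') else 0)) =
      (\<Sum>l1\<in>{c+l'..l}. fps_nth f (l - l1) * fps_nth h (l1 - c - l'))"
    by (rule sum.mono_neutral_cong_right) (use assms in auto)
  show ?thesis
  proof (cases "l' \<le> l")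
    case False
    then show ?thesis unfolding R by simp
  next
    case True
    have "fps_nth (f * fps_X ^ c * h) (l - l') = fps_nth (f * (fps_X ^ c * h)) (l - l')"
      by (simp add: mult.assoc)
    also have "\<dots> = (\<Sum>u=0..l - l'. fps_nth f u * (if c \<le> l - l' - u then fps_nth h (l - l' - u - c) else 0))"
      by (simp only: fps_mult_nth[of f] fps_X_power_mult_nth) (auto intro!: sum.cong simp: not_less)
    also have "\<dots> = (\<Sum>u\<in>{u. u + c + l' \<le> l}. fps_nth f u * fps_nth h (l - l' - u - c))"
      using True by (intro sum.mono_neutral_cong_right) auto
    also have "\<dots> = (\<Sum>l1\<in>{c+l'..l}. fps_nth f (l - l1) * fps_nth h (l1 - c - l'))"
      by (rule sum.reindex_bij_witness[of _ "\<lambda>l1. l - l1" "\<lambda>u. l - u"]) (auto simp: algebra_simps)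
    finally show ?thesis unfolding R using True by simp
  qed
qed



lemma gd_entry:
  assumes g: "g \<in> carrier_mat r r" and i: "i < r" and j: "j < s" and rs: "r \<le> s"
  shows "(g * delta_mat r s lam) $$ (i,j) =
    (if s - r \<le> j then g $$ (i, j - (s - r)) * tpow (lam (j - (s - r))) else 0)"
proof -
  have "(g * delta_mat r s lam) $$ (i,j) =
     (\<Sum>k = 0..<r. g $$ (i,k) * (if s - r \<le> j \<and> j - (s - r) = k then tpow (lam k) else 0))"
    using g i j by (simp add: index_mult_mat scalar_prod_def delta_mat_def)
  also have "\<dots> = (if s - r \<le> j then g $$ (i, j - (s - r)) * tpow (lam (j - (s - r))) else 0)"
  proof (cases "s - r \<le> j")
    case True
    have "j - (s - r) < r" using True j rs by linarith
    then show ?thesis using True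
      by (simp add: if_distrib[of "\<lambda>x. _ * x"] sum.delta cong: if_cong)
  qed simp
  finally show ?thesis .
qed

lemma gdh_entry:
  assumes g: "g \<in> carrier_mat r r" and h: "h \<in> carrier_mat s s"
    and i: "i < r" and j: "j < s" and rs: "r \<le> s"
  shows "(g * delta_mat r s lam * h) $$ (i,j) =
    (\<Sum>i1<r. g $$ (i, i1) * tpow (lam i1) * h $$ (s - r + i1, j))"
proof -
  have "(g * delta_mat r s lam * h) $$ (i,j) =
     (\<Sum>j'=0..<s. (g * delta_mat r s lam) $$ (i,j') * h $$ (j', j))"
    using g h i j by (simp add: index_mult_mat scalar_prod_def delta_mat_def)
  also have "\<dots> = (\<Sum>j'=0..<s. (if s - r \<le> j' then g $$ (i, j' - (s - r)) * tpow (lam (j' - (s - r))) else 0) * h $$ (j', j))"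
    by (rule sum.cong[OF refl]) (use gd_entry[OF g i _ rs] in auto)
  also have "\<dots> = (\<Sum>j'\<in>{s-r..<s}. g $$ (i, j' - (s - r)) * tpow (lam (j' - (s - r))) * h $$ (j', j))"
    by (rule sum.mono_neutral_cong_right) auto
  also have "\<dots> = (\<Sum>i1<r. g $$ (i, i1) * tpow (lam i1) * h $$ (s - r + i1, j))"
    by (rule sum.reindex_bij_witness[of _ "\<lambda>i1. s - r + i1" "\<lambda>j'. j' - (s - r)"]) (use rs in auto)
  finally show ?thesis .
qed

definition Sset :: "nat \<Rightarrow> (nat \<Rightarrow> enat) \<Rightarrow> nat \<Rightarrow> (nat \<times> nat) set" where
  "Sset r lam a = {(i,l). i < r \<and> lam i \<le> enat l \<and> l < a}"

definition Ecoef :: "complex fps mat \<Rightarrow> nat \<times> nat \<Rightarrow> nat \<times> nat \<Rightarrow> complex" where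
  "Ecoef A p q = (if snd q \<le> snd p then fps_nth (A $$ (fst p, fst q)) (snd p - snd q) else 0)"

definition Gf :: "complex fps mat \<Rightarrow> nat \<times> nat \<Rightarrow> nat \<times> nat \<Rightarrow> complex" where
  "Gf g p \<sigma> = (if snd \<sigma> \<le> snd p then fps_nth (g $$ (fst p, fst \<sigma>)) (snd p - snd \<sigma>) else 0)"

definition Hf :: "nat \<Rightarrow> nat \<Rightarrow> (nat \<Rightarrow> enat) \<Rightarrow> complex fps mat \<Rightarrow> nat \<times> nat \<Rightarrow> nat \<times> nat \<Rightarrow> complex" where
  "Hf r s lam h q \<sigma> = (if the_enat (lam (fst \<sigma>)) + snd q \<le> snd \<sigma>
      then fps_nth (h $$ (s - r + fst \<sigma>, fst q)) (snd \<sigma> - the_enat (lam (fst \<sigma>)) - snd q) else 0)"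

lemma Gf_simp: "Gf g (i,l) (i1,l1) = (if l1 \<le> l then fps_nth (g $$ (i, i1)) (l - l1) else 0)"
  by (simp add: Gf_def)

lemma Hf_simp: "Hf r s lam h (j,l') (i1,l1) = (if the_enat (lam i1) + l' \<le> l1
      then fps_nth (h $$ (s - r + i1, j)) (l1 - the_enat (lam i1) - l') else 0)"
  by (simp add: Hf_def)

lemma finite_Sset: "finite (Sset r lam a)"
  by (rule finite_subset[of _ "{..<r} \<times> {..<a}"]) (auto simp: Sset_def)

lemma key_coef:
  assumes g: "g \<in> carrier_mat r r" and h: "h \<in> carrier_mat s s"
    and i: "i < r" and j: "j < s" and rs: "r \<le> s" and la: "l < a"
  shows "Ecoef (g * delta_mat r s lam * h) (i,l) (j,l') =
    (\<Sum>\<sigma>\<in>Sset r lam a. Gf g (i,l) \<sigma> * Hf r s lam h (j,l') \<sigma>)"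
proof -
  let ?F = "{i1. i1 < r \<and> lam i1 \<noteq> \<infinity>}"
  have S: "Sset r lam a = Sigma ?F (\<lambda>i1. {the_enat (lam i1)..<a})"
    by (auto simp: Sset_def) (metis enat_ord_simps(1) enat.exhaust the_enat.simps infinity_ileE)+
  have "Ecoef (g * delta_mat r s lam * h) (i,l) (j,l') =
     (\<Sum>i1<r. (if l' \<le> l then fps_nth (g $$ (i, i1) * tpow (lam i1) * h $$ (s - r + i1, j)) (l - l') else 0))"
    by (simp add: Ecoef_def gdh_entry[OF g h i j rs] fps_sum_nth sum.If_cases)
  also have "\<dots> = (\<Sum>i1\<in>?F. (if l' \<le> l then fps_nth (g $$ (i, i1) * tpow (lam i1) * h $$ (s - r + i1, j)) (l - l') else 0))"
    by (rule sum.mono_neutral_cong_right) (auto simp: tpow_def)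
  also have "\<dots> = (\<Sum>i1\<in>?F. \<Sum>l1\<in>{the_enat (lam i1)..<a}. Gf g (i,l) (i1,l1) * Hf r s lam h (j,l') (i1,l1))"
  proof (rule sum.cong[OF refl])
    fix i1 assume "i1 \<in> ?F"
    then obtain c where c: "lam i1 = enat c" by auto
    show "(if l' \<le> l then fps_nth (g $$ (i, i1) * tpow (lam i1) * h $$ (s - r + i1, j)) (l - l') else 0) =
       (\<Sum>l1\<in>{the_enat (lam i1)..<a}. Gf g (i,l) (i1,l1) * Hf r s lam h (j,l') (i1,l1))"
      using fps_coef_aux[OF la, of l' "g $$ (i, i1)" c "h $$ (s - r + i1, j)"]
      unfolding Gf_simp Hf_simp c tpow_def the_enat.simps enat.case by (simp only:)
  qed
  also have "\<dots> = (\<Sum>\<sigma>\<in>Sset r lam a. Gf g (i,l) \<sigma> * Hf r s lam h (j,l') \<sigma>)"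
    unfolding S by (subst sum.Sigma) (auto simp: finite_Sset)
  finally show ?thesis .
qed



lemma delta_in_orbit: "delta_mat r s lam \<in> orbit_arc r s lam"
proof -
  have "delta_mat r s lam = 1\<^sub>m r * delta_mat r s lam * 1\<^sub>m s"
    by (simp add: delta_mat_def)
  moreover have "invertible_mat (1\<^sub>m r :: complex fps mat)"
    unfolding invertible_mat_def inverts_mat_def by (auto intro!: exI[of _ "1\<^sub>m r"])
  ultimately show ?thesis unfolding orbit_arc_def inverts_mat_def
    by (intro CollectI exI[of _ "1\<^sub>m r"] exI[of _ "1\<^sub>m s"]) auto
qed

lemma card_ineq:
  assumes rs: "r \<le> s"
    and incl: "orbit_arc r s lam' \<subseteq> zariski_closure_arc r s (orbit_arc r s lam)"
  shows "card (Sset r lam' a) \<le> card (Sset r lam a)"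
proof (rule ccontr)
  define n where "n = card (Sset r lam' a)"
  define q where "q = card (Sset r lam a)"
  assume "\<not> ?thesis"
  hence qn: "q < n" by (simp add: n_def q_def)
  obtain f where f: "bij_betw f {0..<n} (Sset r lam' a)"
    using ex_bij_betw_nat_finite[OF finite_Sset] n_def by blast
  obtain e where e: "bij_betw e {0..<q} (Sset r lam a)"
    using ex_bij_betw_nat_finite[OF finite_Sset] q_def by blast
  have fS: "f p \<in> Sset r lam' a" if "p < n" for p using f that by (auto simp: bij_betw_def)
  define colf where "colf p = (s - r + fst (f p), snd (f p) - the_enat (lam' (fst (f p))))" for p
  define mnr where "mnr A = det (mat n n (\<lambda>(p,p'). Ecoef A (f p) (colf p')))" for A
  have poly: "mnr \<in> arc_poly_fun r s"
    unfolding mnr_def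
  proof (rule apf_det)
    fix p p' assume p: "p < n" and p': "p' < n"
    have i: "fst (f p) < r" using fS[OF p] by (auto simp: Sset_def)
    have j: "fst (colf p') < s" using fS[OF p'] rs by (auto simp: Sset_def colf_def)
    show "(\<lambda>A. Ecoef A (f p) (colf p')) \<in> arc_poly_fun r s"
    proof (cases "snd (colf p') \<le> snd (f p)")
      case True
      then show ?thesis unfolding Ecoef_def using arc_poly_fun.coord[OF i j] by simp
    next
      case False
      then show ?thesis unfolding Ecoef_def using arc_poly_fun.const[of 0] by simp
    qed
  qed
  have vanish: "mnr B = 0" if Bo: "B \<in> orbit_arc r s lam" for B
  proof -
    obtain g hinv where B: "B = g * delta_mat r s lam * hinv" and g: "g \<in> carrier_mat r r"
      and hinv: "hinv \<in> carrier_mat s s"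
    proof -
      from Bo obtain g h hinv where "B = g * delta_mat r s lam * hinv" "g \<in> carrier_mat r r"
        "hinv \<in> carrier_mat s s" unfolding orbit_arc_def by blast
      thus ?thesis using that by blast
    qed
    define X where "X = mat n q (\<lambda>(p,k). Gf g (f p) (e k))"
    define Y where "Y = mat q n (\<lambda>(k,p'). Hf r s lam hinv (colf p') (e k))"
    have "mat n n (\<lambda>(p,p'). Ecoef B (f p) (colf p')) = X * Y"
    proof (rule eq_matI)
      fix p p' assume "p < dim_row (X * Y)" "p' < dim_col (X * Y)"
      hence p: "p < n" and p': "p' < n" by (auto simp: X_def Y_def)
      obtain i l where il: "f p = (i,l)" by fastforce
      obtain j l' where jl: "colf p' = (j,l')" by fastforce
      have i: "i < r" and la: "l < a" using fS[OF p] il by (auto simp: Sset_def)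
      have j: "j < s" using fS[OF p'] rs jl by (auto simp: Sset_def colf_def)
      have "Ecoef B (f p) (colf p') = (\<Sum>\<sigma>\<in>Sset r lam a. Gf g (f p) \<sigma> * Hf r s lam hinv (colf p') \<sigma>)"
        unfolding B il jl by (rule key_coef[OF g hinv i j rs la])
      also have "\<dots> = (\<Sum>k\<in>{0..<q}. Gf g (f p) (e k) * Hf r s lam hinv (colf p') (e k))"
        by (rule sum.reindex_bij_betw[OF e, symmetric])
      also have "\<dots> = (X * Y) $$ (p,p')"
        using p p' by (simp add: X_def Y_def index_mult_mat scalar_prod_def)
      finally show "mat n n (\<lambda>(p,p'). Ecoef B (f p) (colf p')) $$ (p,p') = (X * Y) $$ (p,p')"
        using p p' by simp
    qed (auto simp: X_def Y_def)
    thus ?thesis unfolding mnr_def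
      by (simp add: det_low_rank[OF _ _ qn] X_def Y_def)
  qed
  have one: "mnr (delta_mat r s lam') = 1"
  proof -
    have "mat n n (\<lambda>(p,p'). Ecoef (delta_mat r s lam') (f p) (colf p')) = 1\<^sub>m n"
    proof (rule eq_matI)
      fix p p' assume "p < dim_row (1\<^sub>m n :: complex mat)" "p' < dim_col (1\<^sub>m n :: complex mat)"
      hence p: "p < n" and p': "p' < n" by auto
      obtain i l where il: "f p = (i,l)" by fastforce
      obtain i' l' where il': "f p' = (i',l')" by fastforce
      have i: "i < r" and la: "lam' i \<le> enat l" using fS[OF p] il by (auto simp: Sset_def)
      have i': "i' < r" and la': "lam' i' \<le> enat l'" using fS[OF p'] il' by (auto simp: Sset_def)
      obtain c' where c': "lam' i' = enat c'" using la' by (cases "lam' i'") auto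
      have cl': "c' \<le> l'" using la' c' by simp
      have inj: "(p = p') = (f p = f p')" using f p p' by (auto simp: bij_betw_def inj_on_def)
      have "Ecoef (delta_mat r s lam') (f p) (colf p') = (if f p = f p' then 1 else 0)"
      proof (cases "i = i'")
        case True
        have "Ecoef (delta_mat r s lam') (f p) (colf p') =
            (if l' - c' \<le> l then fps_nth (fps_X ^ c') (l - (l' - c')) else 0)"
          using i i' rs True c' unfolding Ecoef_def colf_def il il'
          by (simp add: delta_mat_def tpow_def le_diff_conv2)
        also have "\<dots> = (if f p = f p' then 1 else 0)"
          using la c' cl' True il il' by (auto simp: fps_X_power_nth)
        finally show ?thesis .
      next
        case False
        then show ?thesis using i i' rs unfolding Ecoef_def colf_def il il'
          by (simp add: delta_mat_def)
      qed
      thus "mat n n (\<lambda>(p,p'). Ecoef (delta_mat r s lam') (f p) (colf p')) $$ (p,p') = 1\<^sub>m n $$ (p,p')"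
        using p p' inj by simp
    qed auto
    thus ?thesis unfolding mnr_def by simp
  qed
  have "delta_mat r s lam' \<in> zariski_closure_arc r s (orbit_arc r s lam)"
    using incl delta_in_orbit by blast
  hence "mnr (delta_mat r s lam') = 0"
    unfolding zariski_closure_arc_def using poly vanish by blast
  with one show False by simp
qed



definition dd :: "(nat \<Rightarrow> enat) \<Rightarrow> nat \<Rightarrow> nat \<Rightarrow> nat" where
  "dd lam a i = card {l. lam i \<le> enat l \<and> l < a}"

lemma card_Sset: "card (Sset r lam a) = (\<Sum>i<r. dd lam a i)"
proof -
  have "Sset r lam a = Sigma {..<r} (\<lambda>i. {l. lam i \<le> enat l \<and> l < a})"
    by (auto simp: Sset_def)
  thus ?thesis unfolding dd_def by (simp add: card_SigmaI)
qed

lemma dd_enat: "lam i = enat c \<Longrightarrow> dd lam a i = a - c"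
proof -
  assume "lam i = enat c"
  hence "{l. lam i \<le> enat l \<and> l < a} = {c..<a}" by auto
  thus ?thesis by (simp add: dd_def)
qed

lemma dd_inf: "lam i = \<infinity> \<Longrightarrow> dd lam a i = 0"
  by (simp add: dd_def)

lemma dd_big: "enat a \<le> lam i \<Longrightarrow> dd lam a i = 0"
proof -
  assume "enat a \<le> lam i"
  hence "{l. lam i \<le> enat l \<and> l < a} = {}"
    using order_trans by fastforce
  thus ?thesis by (simp add: dd_def)
qed

lemma dd_le: "dd lam a i \<le> a"
proof -
  have "dd lam a i \<le> card {..<a}" unfolding dd_def by (rule card_mono) auto
  thus ?thesis by simp
qed

lemma sum_enat_eq: "(\<Sum>k\<in>A. enat (f k)) = enat (\<Sum>k\<in>A. f k)"
  by (induction A rule: infinite_finite_induct) (auto simp: zero_enat_def)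

lemma sum_enat_inf:
  fixes f :: "nat \<Rightarrow> enat"
  assumes "finite A" "i \<in> A" "f i = \<infinity>"
  shows "(\<Sum>k\<in>A. f k) = \<infinity>"
proof -
  have "f i \<le> (\<Sum>k\<in>A. f k)" by (rule member_le_sum) (use assms in auto)
  thus ?thesis using assms by simp
qed

lemma combinatorics:
  assumes pl: "pre_partition r lam" and pl': "pre_partition r lam'"
    and ineq: "\<And>a. (\<Sum>i<r. dd lam' a i) \<le> (\<Sum>i<r. dd lam a i)"
    and i0: "i0 < r"
  shows "(\<Sum>k = i0..<r. lam k) \<le> (\<Sum>k = i0..<r. lam' k)"
proof (cases "lam i0")
  case (enat a)
  have tail_fin: "\<And>i. i0 \<le> i \<Longrightarrow> i < r \<Longrightarrow> lam i \<le> enat a"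
    using pl enat unfolding pre_partition_def by metis
  define c where "c i = the_enat (lam i)" for i
  have lc: "\<And>i. i0 \<le> i \<Longrightarrow> i < r \<Longrightarrow> lam i = enat (c i) \<and> c i \<le> a"
    using tail_fin unfolding c_def by (metis enat_ile enat_ord_simps(1) the_enat.simps)
  have head0: "\<And>i. i < i0 \<Longrightarrow> dd lam a i = 0"
    using pl enat i0 unfolding pre_partition_def by (intro dd_big) (metis less_imp_le)
  have "(\<Sum>i<r. dd lam a i) = (\<Sum>i\<in>{i0..<r}. dd lam a i)"
    by (rule sum.mono_neutral_cong_right) (use head0 in auto)
  also have "\<dots> = (\<Sum>i\<in>{i0..<r}. a - c i)"
    by (rule sum.cong) (use lc dd_enat in auto)
  finally have eqL: "(\<Sum>i<r. dd lam a i) = (\<Sum>i\<in>{i0..<r}. a - c i)" .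
  have sumL: "(\<Sum>k = i0..<r. lam k) = enat (\<Sum>k = i0..<r. c k)"
    using lc by (simp add: sum_enat_eq[symmetric])
  show ?thesis
  proof (cases "\<exists>i\<in>{i0..<r}. lam' i = \<infinity>")
    case True
    then obtain i where "i \<in> {i0..<r}" "lam' i = \<infinity>" by blast
    hence "(\<Sum>k = i0..<r. lam' k) = \<infinity>" by (intro sum_enat_inf) auto
    thus ?thesis by simp
  next
    case False
    define c' where "c' i = the_enat (lam' i)" for i
    have lc': "\<And>i. i0 \<le> i \<Longrightarrow> i < r \<Longrightarrow> lam' i = enat (c' i)"
      using False unfolding c'_def by (metis atLeastLessThan_iff not_infinity_eq the_enat.simps)
    have "(\<Sum>i\<in>{i0..<r}. a - c' i) = (\<Sum>i\<in>{i0..<r}. dd lam' a i)"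
      by (rule sum.cong) (use lc' dd_enat in auto)
    also have "\<dots> \<le> (\<Sum>i<r. dd lam' a i)"
      by (rule sum_mono2) auto
    also have "\<dots> \<le> (\<Sum>i\<in>{i0..<r}. a - c i)" using ineq[of a] eqL by simp
    finally have le: "(\<Sum>i\<in>{i0..<r}. a - c' i) \<le> (\<Sum>i\<in>{i0..<r}. a - c i)" .
    have "(\<Sum>i\<in>{i0..<r}. int a - int (c' i)) \<le> (\<Sum>i\<in>{i0..<r}. int (a - c' i))"
      by (rule sum_mono) simp
    also have "\<dots> \<le> (\<Sum>i\<in>{i0..<r}. int (a - c i))"
      using le by (simp flip: of_nat_sum)
    also have "\<dots> = (\<Sum>i\<in>{i0..<r}. int a - int (c i))"
      by (rule sum.cong) (use lc in auto)
    finally have "(\<Sum>i\<in>{i0..<r}. int (c i)) \<le> (\<Sum>i\<in>{i0..<r}. int (c' i))"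
      by (simp add: sum_subtractf)
    hence "(\<Sum>i\<in>{i0..<r}. c i) \<le> (\<Sum>i\<in>{i0..<r}. c' i)"
      by (simp flip: of_nat_sum)
    moreover have "(\<Sum>k = i0..<r. lam' k) = enat (\<Sum>k = i0..<r. c' k)"
      using lc' by (simp add: sum_enat_eq[symmetric])
    ultimately show ?thesis using sumL by simp
  qed
next
  case infinity
  have "(\<Sum>k = i0..<r. lam k) = \<infinity>" by (rule sum_enat_inf) (use i0 infinity in auto)
  moreover have "(\<Sum>k = i0..<r. lam' k) = \<infinity>"
  proof (cases "lam' i0")
    case infinity
    show ?thesis by (rule sum_enat_inf) (use i0 infinity in auto)
  next
    case (enat b)
    define k where "k = r - i0"
    have k1: "k \<ge> 1" using i0 by (simp add: k_def)
    define a where "a = k * b + 1"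
    have ab: "b \<le> a" using k1 unfolding a_def
      by (metis le_add1 le_trans mult_1 mult_le_mono1)
    have head0: "\<And>i. i \<le> i0 \<Longrightarrow> dd lam a i = 0"
      using pl infinity i0 unfolding pre_partition_def by (intro dd_inf) (metis enat.exhaust infinity_ileE)
    have "(\<Sum>i<r. dd lam a i) = (\<Sum>i\<in>{Suc i0..<r}. dd lam a i)"
      by (rule sum.mono_neutral_cong_right) (use head0 in auto)
    also have "\<dots> \<le> (\<Sum>i\<in>{Suc i0..<r}. a)" by (rule sum_mono) (rule dd_le)
    also have "\<dots> = (k - 1) * a" by (simp add: k_def)
    finally have U: "(\<Sum>i<r. dd lam a i) \<le> (k - 1) * a" .
    have tl: "\<And>i. i0 \<le> i \<Longrightarrow> i < r \<Longrightarrow> a - b \<le> dd lam' a i"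
    proof -
      fix i assume "i0 \<le> i" "i < r"
      hence "lam' i \<le> enat b" using pl' enat unfolding pre_partition_def by metis
      then obtain c where "lam' i = enat c" "c \<le> b" by (cases "lam' i") auto
      thus "a - b \<le> dd lam' a i" using dd_enat by simp
    qed
    have "k * (a - b) = (\<Sum>i\<in>{i0..<r}. a - b)" by (simp add: k_def)
    also have "\<dots> \<le> (\<Sum>i\<in>{i0..<r}. dd lam' a i)" by (rule sum_mono) (use tl in auto)
    also have "\<dots> \<le> (\<Sum>i<r. dd lam' a i)" by (rule sum_mono2) auto
    also have "\<dots> \<le> (k - 1) * a" using ineq[of a] U by simp
    finally have "k * (a - b) \<le> (k - 1) * a" .
    hence "int (k * (a - b)) \<le> int ((k - 1) * a)" by linarith
    hence "int k * (int a - int b) \<le> (int k - 1) * int a"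
      using ab k1 by (simp add: of_nat_diff)
    hence False using k1 unfolding a_def by (simp add: algebra_simps)
    thus ?thesis ..
  qed
  ultimately show ?thesis by simp
qed


theorem proposition4p2:
  fixes r s :: nat and lam lam' :: "nat \<Rightarrow> enat"
  assumes "r \<le> s"
    and "pre_partition r lam" and "pre_partition r lam'"
    and "orbit_arc r s lam' \<subseteq> zariski_closure_arc r s (orbit_arc r s lam)"
  shows "tail_dominated r lam lam'"
  unfolding tail_dominated_def
proof (intro allI impI)
  fix i assume "i < r"
  show "(\<Sum>k = i..<r. lam k) \<le> (\<Sum>k = i..<r. lam' k)"
  proof (rule combinatorics[OF assms(2,3) _ \<open>i < r\<close>])
    fix a show "(\<Sum>i<r. dd lam' a i) \<le> (\<Sum>i<r. dd lam a i)"
      using card_ineq[OF assms(1,4), of a] by (simp add: card_Sset)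
  qed
qed

end
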